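(* Let $d\ge 1$ and $L\ge 2$, and let $|\phi_{\mathrm{w},d}(\theta)\rangle$ be the $d$-dimensional Ising whip state defined in the context. Then, with $\theta_d=\pi/(2d)$, $$|\phi_{\mathrm{w},d}(-\theta_d)\rangle=\tfrac{1}{\sqrt2}\big(|0\rangle^{\otimes L^d}+|1\rangle^{\otimes L^d}\big),\qquad |\phi_{\mathrm{w},d}(\theta_d)\rangle=\tfrac{1}{\sqrt2}\big(|s\rangle+|\bar s\rangle\big),$$ where $|s\rangle$ is the computational basis state with bit $s_x=(x_1+\dots+x_d)\bmod 2$ at site $x$ and $|\bar s\rangle$ is its bitwise complement. Consequently these are ground states of $H_J=J\sum_{\langle i,j\rangle}Z_iZ_j$ (sum over nearest-neighbour pairs of the lattice) for $J=-1$ and $J=+1$ respectively, with energy $-d(L-1)L^{d-1}$.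
   Context: Lattice $\Lambda=\{0,\dots,L-1\}^d$ with one qubit per site, $N=L^d$. Directed edges $x\to x+e_k$ ($e_k$ the $k$-th unit vector) whenever both endpoints lie in $\Lambda$. For a site $v$, $\deg^-(v)$ is the number of incoming edges. For each edge $u\to v$ define the gate $G_{u\to v}(\theta)=\exp\!\big(-\mathrm{i}\,\tfrac{d}{\deg^-(v)}\,\theta\, Z_uY_v/2\big)$, where $X,Y,Z$ are Pauli matrices. The whip state is $|\phi_{\mathrm{w},d}(\theta)\rangle=\prod G_{u\to v}(\theta)\,|+\rangle^{\otimes N}$, where $|+\rangle=(|0\rangle+|1\rangle)/\sqrt2$ and the gates are applied in order of increasing layer index $\sum_k v_k$ of the target $v$ (gates whose targets lie in the same layer commute, so their relative order is irrelevant). *)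

theory Defs
  imports Complex_Main
begin

definition site :: "nat \<Rightarrow> nat \<Rightarrow> nat list \<Rightarrow> bool" where
  "site L d x \<longleftrightarrow> length x = d \<and> (\<forall>i<d. x ! i < L)"

definition edges :: "nat \<Rightarrow> nat \<Rightarrow> (nat list \<times> nat list) set" where
  "edges L d = {(x, x[k := Suc (x ! k)]) | x k. site L d x \<and> k < d \<and> Suc (x ! k) < L}"

definition indeg :: "nat \<Rightarrow> nat \<Rightarrow> nat list \<Rightarrow> nat" where
  "indeg L d v = card {u. (u, v) \<in> edges L d}"

definition layer :: "nat list \<Rightarrow> nat" where
  "layer x = sum_list x"

text \<open>Pure states of the qubits: amplitude functions on classical configurations
  (a configuration is a predicate on sites; bit 1 = True).\<close>
type_synonym qstate = "(nat list \<Rightarrow> bool) \<Rightarrow> complex"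

definition config :: "nat \<Rightarrow> nat \<Rightarrow> (nat list \<Rightarrow> bool) \<Rightarrow> bool" where
  "config L d \<sigma> \<longleftrightarrow> (\<forall>x. \<sigma> x \<longrightarrow> site L d x)"

definition supported :: "nat \<Rightarrow> nat \<Rightarrow> qstate \<Rightarrow> bool" where
  "supported L d \<psi> \<longleftrightarrow> (\<forall>\<sigma>. \<psi> \<sigma> \<noteq> 0 \<longrightarrow> config L d \<sigma>)"

definition flip :: "nat list \<Rightarrow> (nat list \<Rightarrow> bool) \<Rightarrow> (nat list \<Rightarrow> bool)" where
  "flip v \<sigma> = \<sigma>(v := \<not> \<sigma> v)"

definition pauliZ :: "nat list \<Rightarrow> qstate \<Rightarrow> qstate" where
  "pauliZ u \<psi> = (\<lambda>\<sigma>. (if \<sigma> u then -1 else 1) * \<psi> \<sigma>)"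

text \<open>Pauli Y on qubit v (Y|0> = i|1>, Y|1> = -i|0>).\<close>
definition pauliY :: "nat list \<Rightarrow> qstate \<Rightarrow> qstate" where
  "pauliY v \<psi> = (\<lambda>\<sigma>. (if \<sigma> v then \<i> else - \<i>) * \<psi> (flip v \<sigma>))"

text \<open>G_{u->v}(theta) = exp(-i a Z_u Y_v / 2) with a = d/deg^-(v) * theta.
  Since (Z_u Y_v)^2 = 1, this exponential equals cos(a/2) I - i sin(a/2) Z_u Y_v.\<close>
definition gate :: "nat \<Rightarrow> nat \<Rightarrow> real \<Rightarrow> nat list \<times> nat list \<Rightarrow> qstate \<Rightarrow> qstate" where
  "gate L d \<theta> e \<psi> =
     (let u = fst e; v = snd e; a = real d / real (indeg L d v) * \<theta>
      in (\<lambda>\<sigma>. complex_of_real (cos (a / 2)) * \<psi> \<sigma>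
               - \<i> * complex_of_real (sin (a / 2)) * pauliZ u (pauliY v \<psi>) \<sigma>))"

definition plus_state :: "nat \<Rightarrow> nat \<Rightarrow> qstate" where
  "plus_state L d = (\<lambda>\<sigma>. if config L d \<sigma> then complex_of_real ((1 / sqrt 2) ^ (L ^ d)) else 0)"

definition gate_order :: "nat \<Rightarrow> nat \<Rightarrow> (nat list \<times> nat list) list \<Rightarrow> bool" where
  "gate_order L d es \<longleftrightarrow> distinct es \<and> set es = edges L d \<and> sorted (map (\<lambda>e. layer (snd e)) es)"

definition whip :: "nat \<Rightarrow> nat \<Rightarrow> (nat list \<times> nat list) list \<Rightarrow> real \<Rightarrow> qstate" where
  "whip L d es \<theta> = fold (gate L d \<theta>) es (plus_state L d)"

definition ket :: "(nat list \<Rightarrow> bool) \<Rightarrow> qstate" where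
  "ket \<sigma> = (\<lambda>\<tau>. if \<tau> = \<sigma> then 1 else 0)"

definition all0 :: "nat list \<Rightarrow> bool" where "all0 = (\<lambda>x. False)"
definition all1 :: "nat \<Rightarrow> nat \<Rightarrow> nat list \<Rightarrow> bool" where "all1 L d = (\<lambda>x. site L d x)"
definition stag :: "nat \<Rightarrow> nat \<Rightarrow> nat list \<Rightarrow> bool" where
  "stag L d = (\<lambda>x. site L d x \<and> sum_list x mod 2 = 1)"
definition stag_bar :: "nat \<Rightarrow> nat \<Rightarrow> nat list \<Rightarrow> bool" where
  "stag_bar L d = (\<lambda>x. site L d x \<and> sum_list x mod 2 = 0)"

definition superpos :: "qstate \<Rightarrow> qstate \<Rightarrow> qstate" where
  "superpos \<phi> \<psi> = (\<lambda>\<sigma>. complex_of_real (1 / sqrt 2) * (\<phi> \<sigma> + \<psi> \<sigma>))"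

text \<open>H_J = J \<Sum>_{<i,j>} Z_i Z_j over nearest-neighbour pairs (each pair = one edge).\<close>
definition ham :: "nat \<Rightarrow> nat \<Rightarrow> real \<Rightarrow> qstate \<Rightarrow> qstate" where
  "ham L d J \<psi> = (\<lambda>\<sigma>. \<Sum>e\<in>edges L d. complex_of_real J * pauliZ (fst e) (pauliZ (snd e) \<psi>) \<sigma>)"

definition eigenvalue :: "nat \<Rightarrow> nat \<Rightarrow> real \<Rightarrow> real \<Rightarrow> bool" where
  "eigenvalue L d J E \<longleftrightarrow> (\<exists>\<psi>. supported L d \<psi> \<and> \<psi> \<noteq> (\<lambda>_. 0)
        \<and> ham L d J \<psi> = (\<lambda>\<sigma>. complex_of_real E * \<psi> \<sigma>))"

definition ground_state :: "nat \<Rightarrow> nat \<Rightarrow> real \<Rightarrow> qstate \<Rightarrow> real \<Rightarrow> bool" where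
  "ground_state L d J \<psi> E \<longleftrightarrow> supported L d \<psi> \<and> \<psi> \<noteq> (\<lambda>_. 0)
        \<and> ham L d J \<psi> = (\<lambda>\<sigma>. complex_of_real E * \<psi> \<sigma>)
        \<and> (\<forall>E'. eigenvalue L d J E' \<longrightarrow> E \<le> E')"

end

theory Submission
  imports Defs
begin

lemma card_bounded_lists:
  "card {xs :: nat list. length xs = n \<and> (\<forall>i<n. xs ! i < f i)} = (\<Prod>i<n. f i)"
proof (induction n arbitrary: f)
  case 0
  then show ?case by simp
next
  case (Suc n)
  have eq: "{xs :: nat list. length xs = Suc n \<and> (\<forall>i<Suc n. xs ! i < f i)}
     = (\<lambda>(a, ys). a # ys) ` ({..<f 0} \<times> {ys. length ys = n \<and> (\<forall>i<n. ys ! i < f (Suc i))})"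
  proof (rule set_eqI, rule iffI)
    fix xs assume "xs \<in> {xs :: nat list. length xs = Suc n \<and> (\<forall>i<Suc n. xs ! i < f i)}"
    then obtain a ys where xs: "xs = a # ys" and l: "length ys = n" and b: "\<forall>i<Suc n. xs ! i < f i"
      by (cases xs) auto
    have "a < f 0" using b xs by auto
    moreover have "\<forall>i<n. ys ! i < f (Suc i)" using b xs by auto
    ultimately show "xs \<in> (\<lambda>(a, ys). a # ys) ` ({..<f 0} \<times> {ys. length ys = n \<and> (\<forall>i<n. ys ! i < f (Suc i))})"
      using xs l by auto
  next
    fix xs assume "xs \<in> (\<lambda>(a, ys). a # ys) ` ({..<f 0} \<times> {ys. length ys = n \<and> (\<forall>i<n. ys ! i < f (Suc i))})"
    then show "xs \<in> {xs :: nat list. length xs = Suc n \<and> (\<forall>i<Suc n. xs ! i < f i)}"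
      by (auto simp: less_Suc_eq_0_disj)
  qed
  have inj: "inj_on (\<lambda>(a, ys). a # ys) ({..<f 0} \<times> {ys :: nat list. length ys = n \<and> (\<forall>i<n. ys ! i < f (Suc i))})"
    by (auto simp: inj_on_def)
  have "card {xs :: nat list. length xs = Suc n \<and> (\<forall>i<Suc n. xs ! i < f i)}
        = f 0 * (\<Prod>i<n. f (Suc i))"
    unfolding eq card_image[OF inj] card_cartesian_product using Suc.IH[of "\<lambda>i. f (Suc i)"] by simp
  then show ?case by (metis prod.lessThan_Suc_shift)
qed

lemma site_set: "{x. site L d x} = {xs. length xs = d \<and> (\<forall>i<d. xs ! i < L)}"
  by (auto simp: site_def)

lemma finite_sites: "finite {x. site L d x}"
proof -
  have "{x. site L d x} \<subseteq> {xs. set xs \<subseteq> {..<L} \<and> length xs = d}"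
    by (auto simp: site_def in_set_conv_nth)
  then show ?thesis using finite_subset finite_lists_length_eq[of "{..<L}" d] by blast
qed

lemma card_sites: "card {x. site L d x} = L ^ d"
  unfolding site_set using card_bounded_lists[of d "\<lambda>_. L"] by simp

lemma sum_list_upd_Suc: "k < length x \<Longrightarrow> sum_list (x[k := Suc (x ! k)]) = Suc (sum_list x)"
proof (induction x arbitrary: k)
  case Nil then show ?case by simp
next
  case (Cons a x) then show ?case by (cases k) auto
qed

definition orig :: "nat \<Rightarrow> nat list" where "orig d = replicate d 0"

lemma edge_props:
  assumes "(u, v) \<in> edges L d"
  shows "site L d u" "site L d v" "u \<noteq> v" "sum_list v = Suc (sum_list u)" "v \<noteq> orig d"
proof -
  obtain k where k: "v = u[k := Suc (u ! k)]" "site L d u" "k < d" "Suc (u ! k) < L"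
    using assms by (auto simp: edges_def)
  show "site L d u" using k by simp
  show "site L d v" using k by (auto simp: site_def nth_list_update)
  show sv: "sum_list v = Suc (sum_list u)" using k sum_list_upd_Suc[of k u] by (simp add: site_def)
  then show "u \<noteq> v" by auto
  show "v \<noteq> orig d" using sv by (auto simp: orig_def sum_list_replicate)
qed

lemma orig_site: "L \<ge> 1 \<Longrightarrow> site L d (orig d)"
  by (auto simp: site_def orig_def)

lemma exists_pred:
  assumes "site L d v" "v \<noteq> orig d"
  shows "\<exists>u. (u, v) \<in> edges L d"
proof -
  have lv: "length v = d" using assms by (simp add: site_def)
  have "\<exists>k<d. v ! k \<noteq> 0"
  proof (rule ccontr)
    assume "\<not> ?thesis"
    then have "v = orig d" using lv by (auto simp: orig_def intro: nth_equalityI)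
    then show False using assms by simp
  qed
  then obtain k where k: "k < d" "v ! k \<noteq> 0" by blast
  define u where "u = v[k := v ! k - 1]"
  have uk: "u ! k = v ! k - 1" using k lv by (simp add: u_def)
  have su: "site L d u" using assms(1) k by (auto simp: site_def u_def nth_list_update)
  have "u[k := Suc (u ! k)] = v" using k uk lv by (simp add: u_def)
  moreover have "Suc (u ! k) < L" using uk k assms(1) by (auto simp: site_def)
  ultimately have "(u, v) \<in> edges L d" using su k unfolding edges_def by blast
  then show ?thesis by blast
qed

lemma finite_edges: "finite (edges L d)"
proof -
  have "edges L d \<subseteq> {x. site L d x} \<times> {x. site L d x}"
    using edge_props(1,2) by auto
  then show ?thesis using finite_sites by (meson finite_SigmaI finite_subset)
qed

lemma indeg_eq: "indeg L d v = card {e \<in> edges L d. snd e = v}"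
proof -
  have "{e \<in> edges L d. snd e = v} = (\<lambda>u. (u, v)) ` {u. (u, v) \<in> edges L d}" by auto
  moreover have "inj_on (\<lambda>u. (u, v)) {u. (u, v) \<in> edges L d}" by (auto simp: inj_on_def)
  ultimately show ?thesis unfolding indeg_def by (simp add: card_image)
qed

lemma indeg_pos:
  assumes "site L d v" "v \<noteq> orig d"
  shows "indeg L d v > 0"
proof -
  obtain u where "(u, v) \<in> edges L d" using exists_pred[OF assms] by blast
  moreover have "finite {u. (u, v) \<in> edges L d}"
    using finite_edges[of L d] by (rule finite_subset[rotated, OF finite_imageI[of _ fst]]) force
  ultimately show ?thesis unfolding indeg_def by (auto simp: card_gt_0_iff)
qed


definition amp :: "real \<Rightarrow> bool \<Rightarrow> real" where
  "amp \<beta> t = (if t then sin \<beta> else cos \<beta>)"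

definition st :: "nat \<Rightarrow> nat \<Rightarrow> (nat list \<Rightarrow> bool \<Rightarrow> real) \<Rightarrow> qstate" where
  "st L d B = (\<lambda>\<sigma>. if config L d \<sigma>
       then complex_of_real (\<Prod>x\<in>{x. site L d x}. amp (B x (\<sigma> (orig d))) (\<sigma> x)) else 0)"

lemma config_flip: "site L d v \<Longrightarrow> config L d (flip v \<sigma>) = config L d \<sigma>"
  by (auto simp: config_def flip_def)

lemma prod_split_site:
  assumes "site L d v"
  shows "(\<Prod>x\<in>{x. site L d x}. h x) = h v * (\<Prod>x\<in>{x. site L d x} - {v}. h x)"
  using assms finite_sites by (subst prod.remove[of _ v]) auto

lemma step:
  assumes uv: "site L d u" "site L d v" "u \<noteq> v" "v \<noteq> orig d"
    and det: "\<And>\<sigma>. config L d \<sigma> \<Longrightarrow> amp (B u (\<sigma> (orig d))) (\<sigma> u) \<noteq> 0 \<Longrightarrow>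
                 (if \<sigma> u then -1 else 1) = S (\<sigma> (orig d))"
    and S: "\<And>b. S b = 1 \<or> S b = -1"
  shows "gate L d \<theta> (u, v) (st L d B) =
     st L d (B(v := (\<lambda>b. B v b + S b * (real d / real (indeg L d v) * \<theta> / 2))))"
proof
  fix \<sigma> :: "nat list \<Rightarrow> bool"
  define c where "c = real d / real (indeg L d v) * \<theta> / 2"
  define b where "b = \<sigma> (orig d)"
  define P where "P = (\<Prod>x\<in>{x. site L d x} - {v}. amp (B x b) (\<sigma> x))"
  let ?B' = "B(v := (\<lambda>b. B v b + S b * c))"
  show "gate L d \<theta> (u, v) (st L d B) \<sigma> = st L d ?B' \<sigma>"
  proof (cases "config L d \<sigma>")
    case False
    then show ?thesis using config_flip[OF uv(2)]
      by (simp add: gate_def st_def pauliZ_def pauliY_def Let_def)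
  next
    case True
    have fo: "flip v \<sigma> (orig d) = b" using uv(4) by (simp add: flip_def b_def)
    have fv: "flip v \<sigma> v = (\<not> \<sigma> v)" by (simp add: flip_def)
    have P2: "(\<Prod>x\<in>{x. site L d x} - {v}. amp (B x b) (flip v \<sigma> x)) = P"
      unfolding P_def by (rule prod.cong) (auto simp: flip_def)
    have P3: "(\<Prod>x\<in>{x. site L d x} - {v}. amp (?B' x b) (\<sigma> x)) = P"
      unfolding P_def by (rule prod.cong) auto
    have st1: "st L d B \<sigma> = complex_of_real (amp (B v b) (\<sigma> v) * P)"
      using True by (simp add: st_def prod_split_site[OF uv(2)] P_def b_def)
    have st2: "st L d B (flip v \<sigma>) = complex_of_real (amp (B v b) (\<not> \<sigma> v) * P)"
      using True config_flip[OF uv(2)] P2 fo fv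
      by (simp add: st_def prod_split_site[OF uv(2)])
    have st3: "st L d ?B' \<sigma> = complex_of_real (amp (B v b + S b * c) (\<sigma> v) * P)"
      using True P3 by (simp add: st_def prod_split_site[OF uv(2)] b_def)
    have gexp: "gate L d \<theta> (u, v) (st L d B) \<sigma> =
        complex_of_real (cos c) * st L d B \<sigma>
        - \<i> * complex_of_real (sin c) * ((if \<sigma> u then -1 else 1) *
             ((if \<sigma> v then \<i> else - \<i>) * st L d B (flip v \<sigma>)))"
      by (simp add: gate_def pauliZ_def pauliY_def Let_def c_def)
    show ?thesis
    proof (cases "P = 0")
      case True
      then show ?thesis using gexp st1 st2 st3 by simp
    next
      case False
      have "amp (B u b) (\<sigma> u) \<noteq> 0"
      proof
        assume "amp (B u b) (\<sigma> u) = 0"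
        then have "P = 0" unfolding P_def using uv finite_sites
          by (intro prod_zero) auto
        then show False using False by simp
      qed
      then have zu: "(if \<sigma> u then -1 else 1) = S b" using det[OF True] by (simp add: b_def)
      have zu': "(if \<sigma> u then -1 else (1::complex)) = complex_of_real (S b)"
        using zu by (cases "\<sigma> u") (metis of_real_1 of_real_minus)+
      have trig: "amp (B v b + S b * c) (\<sigma> v) =
           cos c * amp (B v b) (\<sigma> v) + S b * sin c * (if \<sigma> v then 1 else -1) * amp (B v b) (\<not> \<sigma> v)"
        using S[of b] by (auto simp: amp_def sin_add cos_add)
      show ?thesis
        unfolding gexp st1 st2 st3 zu' trig
        by (cases "\<sigma> v") (simp_all add: algebra_simps)
    qed
  qed
qed


definition Bn :: "nat \<Rightarrow> nat \<Rightarrow> (nat list \<times> nat list) list \<Rightarrow> real \<Rightarrow> (nat list \<Rightarrow> bool \<Rightarrow> real)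
   \<Rightarrow> nat \<Rightarrow> nat list \<Rightarrow> bool \<Rightarrow> real" where
  "Bn L d es \<theta> sg n x b = pi / 4 + real (card {e \<in> set (take n es). snd e = x}) * sg x b
       * (real d / real (indeg L d x) * \<theta> / 2)"

lemma plus_st: "plus_state L d = st L d (\<lambda>x b. pi / 4)"
proof
  fix \<sigma>
  have a: "amp (pi/4) t = 1 / sqrt 2" for t
    by (simp add: amp_def sin_45 cos_45 real_div_sqrt)
  show "plus_state L d \<sigma> = st L d (\<lambda>x b. pi / 4) \<sigma>"
    by (simp add: plus_state_def st_def a card_sites)
qed

lemma before:
  assumes go: "gate_order L d es" and n: "n < length es" and e: "es ! n = (u, v)"
  shows "{e \<in> set (take n es). snd e = u} = {e \<in> edges L d. snd e = u}"
proof
  show "{e \<in> set (take n es). snd e = u} \<subseteq> {e \<in> edges L d. snd e = u}"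
    using go by (auto simp: gate_order_def dest: in_set_takeD)
next
  show "{e \<in> edges L d. snd e = u} \<subseteq> {e \<in> set (take n es). snd e = u}"
  proof
    fix e assume "e \<in> {e \<in> edges L d. snd e = u}"
    then have ee: "e \<in> set es" "snd e = u" "e \<in> edges L d" using go by (auto simp: gate_order_def)
    then obtain j where j: "j < length es" "es ! j = e" by (auto simp: in_set_conv_nth)
    have uv: "(u, v) \<in> edges L d" using go e n nth_mem[OF n] by (auto simp: gate_order_def)
    obtain w where w: "e = (w, u)" using ee by (metis prod.collapse)
    have lay: "layer u < layer v" using edge_props(4)[OF uv] by (simp add: layer_def)
    have "j < n"
    proof (rule ccontr)
      assume "\<not> j < n"
      then have "(map (\<lambda>e. layer (snd e)) es) ! n \<le> (map (\<lambda>e. layer (snd e)) es) ! j"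
        using go j by (intro sorted_nth_mono) (auto simp: gate_order_def)
      then show False using lay j n e w by simp
    qed
    then have "e \<in> set (take n es)" using j n by (auto simp: in_set_conv_nth intro!: exI[of _ j])
    then show "e \<in> {e \<in> set (take n es). snd e = u}" using ee by simp
  qed
qed

lemma whip_inv:
  assumes go: "gate_order L d es" and L: "L \<ge> 1"
    and g0: "\<And>b. g (orig d) b = b"
    and HS: "\<And>u v b. (u, v) \<in> edges L d \<Longrightarrow> (if g u b then -1 else 1) = sg v b"
    and HC: "\<And>x b. site L d x \<Longrightarrow> x \<noteq> orig d \<Longrightarrow>
                pi / 4 + sg x b * (real d * \<theta> / 2) = (if g x b then pi / 2 else 0)"
  shows "n \<le> length es \<Longrightarrow> fold (gate L d \<theta>) (take n es) (plus_state L d) = st L d (Bn L d es \<theta> sg n)"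
proof (induction n)
  case 0
  then show ?case by (simp add: plus_st Bn_def)
next
  case (Suc n)
  then have n: "n < length es" by simp
  obtain u v where e: "es ! n = (u, v)" by (cases "es ! n") auto
  have uv: "(u, v) \<in> edges L d" using go e n nth_mem[OF n] by (auto simp: gate_order_def)
  have IH: "fold (gate L d \<theta>) (take n es) (plus_state L d) = st L d (Bn L d es \<theta> sg n)"
    using Suc by simp
  have tk: "take (Suc n) es = take n es @ [(u, v)]" using n e by (simp add: take_Suc_conv_app_nth)
  define S where "S = (\<lambda>b. if g u b then -1 else (1::real))"
  have det: "(if \<sigma> u then -1 else 1) = S (\<sigma> (orig d))"
    if "config L d \<sigma>" "amp (Bn L d es \<theta> sg n u (\<sigma> (orig d))) (\<sigma> u) \<noteq> 0" for \<sigma>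
  proof (cases "u = orig d")
    case True
    then show ?thesis by (simp add: S_def g0)
  next
    case False
    have su: "site L d u" using edge_props(1)[OF uv] .
    have k: "indeg L d u > 0" using indeg_pos[OF su False] .
    have "card {e \<in> set (take n es). snd e = u} = indeg L d u"
      using before[OF go n e] indeg_eq by simp
    then have "Bn L d es \<theta> sg n u b = pi / 4 + sg u b * (real d * \<theta> / 2)" for b
      using k by (simp add: Bn_def field_simps)
    then have "Bn L d es \<theta> sg n u b = (if g u b then pi / 2 else 0)" for b
      using HC[OF su False] by simp
    then have "\<sigma> u = g u (\<sigma> (orig d))" using that(2)
      by (cases "\<sigma> u"; cases "g u (\<sigma> (orig d))") (auto simp: amp_def)
    then show ?thesis by (simp add: S_def)
  qed
  have stp: "gate L d \<theta> (u, v) (st L d (Bn L d es \<theta> sg n)) =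
     st L d ((Bn L d es \<theta> sg n)(v := (\<lambda>b. Bn L d es \<theta> sg n v b + S b * (real d / real (indeg L d v) * \<theta> / 2))))"
    using edge_props[OF uv] det by (intro step) (auto simp: S_def)
  have notin: "(u, v) \<notin> set (take n es)"
  proof
    assume "(u, v) \<in> set (take n es)"
    then obtain j where "j < n" "es ! j = (u, v)" using n by (auto simp: in_set_conv_nth)
    moreover have "distinct es" using go by (simp add: gate_order_def)
    ultimately show False using e n nth_eq_iff_index_eq[of es j n] by simp
  qed
  have upd: "(Bn L d es \<theta> sg n)(v := (\<lambda>b. Bn L d es \<theta> sg n v b + S b * (real d / real (indeg L d v) * \<theta> / 2)))
     = Bn L d es \<theta> sg (Suc n)"
  proof (intro ext)
    fix x b
    show "((Bn L d es \<theta> sg n)(v := (\<lambda>b. Bn L d es \<theta> sg n v b + S b * (real d / real (indeg L d v) * \<theta> / 2)))) x b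
      = Bn L d es \<theta> sg (Suc n) x b"
    proof (cases "x = v")
      case True
      have "{e \<in> set (take (Suc n) es). snd e = v} = insert (u, v) {e \<in> set (take n es). snd e = v}"
        using tk by auto
      moreover have "finite {e \<in> set (take n es). snd e = v}" by simp
      ultimately have c: "card {e \<in> set (take (Suc n) es). snd e = v} = Suc (card {e \<in> set (take n es). snd e = v})"
        using notin by simp
      have "S b = sg v b" using HS[OF uv] by (simp add: S_def)
      then show ?thesis using True c by (simp add: Bn_def algebra_simps)
    next
      case False
      have "{e \<in> set (take (Suc n) es). snd e = x} = {e \<in> set (take n es). snd e = x}"
        using tk False by auto
      then show ?thesis using False by (simp add: Bn_def)
    qed
  qed
  show ?case using IH stp upd tk by simp
qed


lemma whip_final:
  assumes go: "gate_order L d es" and L: "L \<ge> 1"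
    and g0: "\<And>b. g (orig d) b = b"
    and HS: "\<And>u v b. (u, v) \<in> edges L d \<Longrightarrow> (if g u b then -1 else 1) = sg v b"
    and HC: "\<And>x b. site L d x \<Longrightarrow> x \<noteq> orig d \<Longrightarrow>
                pi / 4 + sg x b * (real d * \<theta> / 2) = (if g x b then pi / 2 else 0)"
  shows "whip L d es \<theta> = (\<lambda>\<sigma>. if config L d \<sigma> \<and> (\<forall>x. site L d x \<longrightarrow> x \<noteq> orig d \<longrightarrow> \<sigma> x = g x (\<sigma> (orig d)))
            then complex_of_real (1 / sqrt 2) else 0)"
proof
  fix \<sigma> :: "nat list \<Rightarrow> bool"
  define b where "b = \<sigma> (orig d)"
  have w: "whip L d es \<theta> = st L d (Bn L d es \<theta> sg (length es))"
    using whip_inv[where g=g and sg=sg and \<theta>=\<theta> and n="length es", OF go L g0 HS HC] by (simp add: whip_def)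
  have so: "site L d (orig d)" using orig_site[OF L] .
  have B0: "Bn L d es \<theta> sg (length es) (orig d) b' = pi / 4" for b'
  proof -
    have "{e \<in> set es. snd e = orig d} = {}"
      using go edge_props(5) by (auto simp: gate_order_def)
    then show ?thesis by (simp add: Bn_def)
  qed
  have B1: "Bn L d es \<theta> sg (length es) x b' = (if g x b' then pi / 2 else 0)"
    if "site L d x" "x \<noteq> orig d" for x b'
  proof -
    have k: "indeg L d x > 0" using indeg_pos[OF that] .
    have "card {e \<in> set es. snd e = x} = indeg L d x"
      using go indeg_eq by (simp add: gate_order_def)
    then have "Bn L d es \<theta> sg (length es) x b' = pi / 4 + sg x b' * (real d * \<theta> / 2)"
      using k by (simp add: Bn_def field_simps)
    then show ?thesis using HC[OF that] by simp
  qed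
  have a0: "amp (pi/4) t = 1 / sqrt 2" for t
    by (simp add: amp_def sin_45 cos_45 real_div_sqrt)
  have P: "(\<Prod>x\<in>{x. site L d x}. amp (Bn L d es \<theta> sg (length es) x b) (\<sigma> x))
      = 1 / sqrt 2 * (\<Prod>x\<in>{x. site L d x} - {orig d}. (if \<sigma> x = g x b then 1 else 0))"
    unfolding prod_split_site[OF so] B0 a0
    by (intro arg_cong[where f="\<lambda>t. 1 / sqrt 2 * t"] prod.cong) (auto simp: B1 amp_def)
  have Q: "(\<Prod>x\<in>{x. site L d x} - {orig d}. (if \<sigma> x = g x b then 1 else 0::real))
      = (if (\<forall>x. site L d x \<longrightarrow> x \<noteq> orig d \<longrightarrow> \<sigma> x = g x b) then 1 else 0)"
  proof (cases "\<forall>x. site L d x \<longrightarrow> x \<noteq> orig d \<longrightarrow> \<sigma> x = g x b")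
    case True
    then show ?thesis by (intro trans[OF prod.neutral]) auto
  next
    case False
    then obtain x where "site L d x" "x \<noteq> orig d" "\<sigma> x \<noteq> g x b" by blast
    then show ?thesis using finite_sites False by (intro trans[OF prod_zero]) (auto intro!: bexI[of _ x])
  qed
  show "whip L d es \<theta> \<sigma> = (if config L d \<sigma> \<and> (\<forall>x. site L d x \<longrightarrow> x \<noteq> orig d \<longrightarrow> \<sigma> x = g x (\<sigma> (orig d)))
            then complex_of_real (1 / sqrt 2) else 0)"
    unfolding w st_def b_def[symmetric] P Q by auto
qed

lemma superpos_val:
  assumes "A \<noteq> B"
  shows "superpos (ket A) (ket B) = (\<lambda>\<sigma>. if \<sigma> = A \<or> \<sigma> = B then complex_of_real (1 / sqrt 2) else 0)"
  using assms by (auto simp: superpos_def ket_def)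

lemma ghz_char:
  assumes L: "L \<ge> 1"
  shows "(config L d \<sigma> \<and> (\<forall>x. site L d x \<longrightarrow> x \<noteq> orig d \<longrightarrow> \<sigma> x = \<sigma> (orig d)))
     \<longleftrightarrow> (\<sigma> = all0 \<or> \<sigma> = all1 L d)"
proof
  assume h: "config L d \<sigma> \<and> (\<forall>x. site L d x \<longrightarrow> x \<noteq> orig d \<longrightarrow> \<sigma> x = \<sigma> (orig d))"
  show "\<sigma> = all0 \<or> \<sigma> = all1 L d"
  proof (cases "\<sigma> (orig d)")
    case True
    then have "\<sigma> = all1 L d" using h by (auto simp: all1_def config_def)
    then show ?thesis by simp
  next
    case False
    then have "\<sigma> = all0" using h unfolding all0_def config_def by (metis ext)
    then show ?thesis by simp
  qed
next
  assume "\<sigma> = all0 \<or> \<sigma> = all1 L d"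
  then show "config L d \<sigma> \<and> (\<forall>x. site L d x \<longrightarrow> x \<noteq> orig d \<longrightarrow> \<sigma> x = \<sigma> (orig d))"
    using orig_site[OF L] by (auto simp: all0_def all1_def config_def)
qed

lemma odd_Suc0: "odd (n::nat) \<longleftrightarrow> n mod 2 = Suc 0" by presburger

lemma stag_char:
  assumes L: "L \<ge> 1"
  shows "(config L d \<sigma> \<and> (\<forall>x. site L d x \<longrightarrow> x \<noteq> orig d \<longrightarrow> \<sigma> x = (\<sigma> (orig d) \<noteq> odd (sum_list x))))
     \<longleftrightarrow> (\<sigma> = stag L d \<or> \<sigma> = stag_bar L d)"
proof
  assume h: "config L d \<sigma> \<and> (\<forall>x. site L d x \<longrightarrow> x \<noteq> orig d \<longrightarrow> \<sigma> x = (\<sigma> (orig d) \<noteq> odd (sum_list x)))"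
  have s0: "sum_list (orig d) = 0" by (simp add: orig_def sum_list_replicate)
  show "\<sigma> = stag L d \<or> \<sigma> = stag_bar L d"
  proof (cases "\<sigma> (orig d)")
    case True
    have "\<sigma> = stag_bar L d"
    proof
      fix x show "\<sigma> x = stag_bar L d x"
        using h True s0 by (cases "x = orig d") (auto simp: stag_bar_def config_def orig_def sum_list_replicate)
    qed
    then show ?thesis by simp
  next
    case False
    have "\<sigma> = stag L d"
    proof
      fix x show "\<sigma> x = stag L d x"
        using h False s0 by (cases "x = orig d") (auto simp: stag_def config_def orig_def sum_list_replicate odd_Suc0)
    qed
    then show ?thesis by simp
  qed
next
  have s0: "sum_list (orig d) = 0" by (simp add: orig_def sum_list_replicate)
  assume "\<sigma> = stag L d \<or> \<sigma> = stag_bar L d"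
  then show "config L d \<sigma> \<and> (\<forall>x. site L d x \<longrightarrow> x \<noteq> orig d \<longrightarrow> \<sigma> x = (\<sigma> (orig d) \<noteq> odd (sum_list x)))"
    using orig_site[OF L] by (auto simp: stag_def stag_bar_def config_def odd_Suc0 orig_def sum_list_replicate)
qed


lemma card_edges:
  assumes L: "L \<ge> 1"
  shows "card (edges L d) = d * ((L - 1) * L ^ (d - 1))"
proof -
  define F where "F = (\<lambda>(k, x). (x, x[k := Suc (x ! k)]))"
  define D where "D = (SIGMA k:{..<d}. {x. site L d x \<and> Suc (x ! k) < L})"
  have e: "edges L d = F ` D"
  proof (rule set_eqI, rule iffI)
    fix e assume "e \<in> edges L d"
    then obtain x k where "e = (x, x[k := Suc (x ! k)])" "site L d x" "k < d" "Suc (x ! k) < L"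
      unfolding edges_def by blast
    then show "e \<in> F ` D" unfolding F_def D_def by (intro image_eqI[of _ _ "(k, x)"]) auto
  next
    fix e assume "e \<in> F ` D"
    then obtain p where p: "p \<in> D" "e = F p" by blast
    obtain k x where kx: "p = (k, x)" by (cases p)
    have "(k, x) \<in> D" using p kx by simp
    then have "site L d x" "k < d" "Suc (x ! k) < L" unfolding D_def by auto
    moreover have "e = (x, x[k := Suc (x ! k)])" using p kx by (simp add: F_def)
    ultimately have "e = (x, x[k := Suc (x ! k)])" "site L d x" "k < d" "Suc (x ! k) < L" by auto
    then show "e \<in> edges L d" unfolding edges_def by blast
  qed
  have inj: "inj_on F D"
  proof (rule inj_onI)
    fix p q assume p: "p \<in> D" and q: "q \<in> D" and eq: "F p = F q"
    obtain k x where pk: "p = (k, x)" by (cases p)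
    obtain k' x' where qk: "q = (k', x')" by (cases q)
    have xx: "x = x'" using eq pk qk by (simp add: F_def)
    have lx: "length x = d" "k < d" "k' < d" using p q pk qk by (auto simp: D_def site_def)
    have "k = k'"
    proof (rule ccontr)
      assume ne: "k \<noteq> k'"
      have "x[k := Suc (x ! k)] ! k = x[k' := Suc (x ! k')] ! k" using eq pk qk xx by (simp add: F_def)
      then show False using ne lx by simp
    qed
    then show "p = q" using pk qk xx by simp
  qed
  have ck: "card {x. site L d x \<and> Suc (x ! k) < L} = (L - 1) * L ^ (d - 1)" if k: "k < d" for k
  proof -
    have "{x. site L d x \<and> Suc (x ! k) < L} = {xs. length xs = d \<and> (\<forall>i<d. xs ! i < (if i = k then L - 1 else L))}"
    proof (rule Collect_cong)
      fix xs :: "nat list"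
      have "(\<forall>i<d. xs ! i < L) \<and> Suc (xs ! k) < L \<longleftrightarrow> (\<forall>i<d. xs ! i < (if i = k then L - 1 else L))"
      proof
        assume h: "(\<forall>i<d. xs ! i < L) \<and> Suc (xs ! k) < L"
        show "\<forall>i<d. xs ! i < (if i = k then L - 1 else L)"
        proof (intro allI impI)
          fix i assume "i < d" then show "xs ! i < (if i = k then L - 1 else L)"
            using h by (cases "i = k") auto
        qed
      next
        assume h: "\<forall>i<d. xs ! i < (if i = k then L - 1 else L)"
        have "xs ! k < L - 1" using h k by (metis (full_types))
        then have "Suc (xs ! k) < L" by linarith
        moreover have "\<forall>i<d. xs ! i < L"
        proof (intro allI impI)
          fix i assume "i < d" then show "xs ! i < L"
            using h by (cases "i = k") force+
        qed
        ultimately show "(\<forall>i<d. xs ! i < L) \<and> Suc (xs ! k) < L" by simp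
      qed
      then show "site L d xs \<and> Suc (xs ! k) < L \<longleftrightarrow> length xs = d \<and> (\<forall>i<d. xs ! i < (if i = k then L - 1 else L))"
        unfolding site_def by blast
    qed
    then have "card {x. site L d x \<and> Suc (x ! k) < L} = (\<Prod>i<d. (if i = k then L - 1 else L))"
      using card_bounded_lists by simp
    also have "\<dots> = (L - 1) * (\<Prod>i\<in>{..<d} - {k}. (if i = k then L - 1 else L))"
      using k by (subst prod.remove[of _ k]) auto
    also have "(\<Prod>i\<in>{..<d} - {k}. (if i = k then L - 1 else L)) = (\<Prod>i\<in>{..<d} - {k}. L)"
      by (rule prod.cong) auto
    also have "\<dots> = L ^ (d - 1)" using k by simp
    finally show ?thesis .
  qed
  have fin: "finite {x. site L d x \<and> Suc (x ! k) < L}" for k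
    using finite_sites[of L d] by (rule finite_subset[rotated]) auto
  have "card D = (\<Sum>k<d. card {x. site L d x \<and> Suc (x ! k) < L})"
    unfolding D_def using fin by (subst card_SigmaI) auto
  also have "\<dots> = (\<Sum>k<d. (L - 1) * L ^ (d - 1))" using ck by (intro sum.cong) auto
  finally show ?thesis unfolding e card_image[OF inj] by simp
qed

definition zr :: "bool \<Rightarrow> real" where "zr t = (if t then -1 else 1)"

definition en :: "nat \<Rightarrow> nat \<Rightarrow> real \<Rightarrow> (nat list \<Rightarrow> bool) \<Rightarrow> real" where
  "en L d J \<sigma> = (\<Sum>e\<in>edges L d. J * zr (\<sigma> (fst e)) * zr (\<sigma> (snd e)))"

lemma ham_diag: "ham L d J \<psi> \<sigma> = complex_of_real (en L d J \<sigma>) * \<psi> \<sigma>"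
proof -
  have z: "(if t then -1 else 1 :: complex) = complex_of_real (zr t)" for t
    by (simp add: zr_def)
  show ?thesis
    unfolding ham_def en_def pauliZ_def z of_real_sum sum_distrib_right
    by (intro sum.cong) (simp_all add: algebra_simps)
qed

lemma ground:
  fixes J :: real
  assumes AB: "A \<noteq> B" and cA: "config L d A" and cB: "config L d B" and J: "J = 1 \<or> J = -1"
    and HA: "\<And>u v. (u, v) \<in> edges L d \<Longrightarrow> J * zr (A u) * zr (A v) = -1"
    and HB: "\<And>u v. (u, v) \<in> edges L d \<Longrightarrow> J * zr (B u) * zr (B v) = -1"
  shows "ground_state L d J (superpos (ket A) (ket B)) (- real (card (edges L d)))"
proof -
  let ?\<psi> = "superpos (ket A) (ket B)"
  have sv: "?\<psi> = (\<lambda>\<sigma>. if \<sigma> = A \<or> \<sigma> = B then complex_of_real (1 / sqrt 2) else 0)"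
    using superpos_val[OF AB] .
  have eA: "en L d J A = - real (card (edges L d))"
    unfolding en_def using HA by (subst sum.cong[OF refl, of _ _ "\<lambda>_. -1"]) auto
  have eB: "en L d J B = - real (card (edges L d))"
    unfolding en_def using HB by (subst sum.cong[OF refl, of _ _ "\<lambda>_. -1"]) auto
  have sup: "supported L d ?\<psi>" using cA cB by (auto simp: supported_def sv)
  have nz: "?\<psi> \<noteq> (\<lambda>_. 0)"
  proof
    assume "?\<psi> = (\<lambda>_. 0)"
    then have "?\<psi> A = 0" by simp
    then show False by (simp add: sv)
  qed
  have eig: "ham L d J ?\<psi> = (\<lambda>\<sigma>. complex_of_real (- real (card (edges L d))) * ?\<psi> \<sigma>)"
  proof
    fix \<sigma> show "ham L d J ?\<psi> \<sigma> = complex_of_real (- real (card (edges L d))) * ?\<psi> \<sigma>"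
      unfolding ham_diag using eA eB by (auto simp: sv)
  qed
  have low: "- real (card (edges L d)) \<le> E'" if ev: "eigenvalue L d J E'" for E'
  proof -
    obtain \<phi> where \<phi>: "\<phi> \<noteq> (\<lambda>_. 0)" "ham L d J \<phi> = (\<lambda>\<sigma>. complex_of_real E' * \<phi> \<sigma>)"
      using ev unfolding eigenvalue_def by blast
    obtain \<sigma> where s: "\<phi> \<sigma> \<noteq> 0" using \<phi>(1) by auto
    have "complex_of_real (en L d J \<sigma>) * \<phi> \<sigma> = complex_of_real E' * \<phi> \<sigma>"
      using fun_cong[OF \<phi>(2), of \<sigma>] by (simp add: ham_diag)
    then have "en L d J \<sigma> = E'" using s by simp
    moreover have "(\<Sum>e\<in>edges L d. (-1::real)) \<le> en L d J \<sigma>"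
      unfolding en_def using J by (intro sum_mono) (auto simp: zr_def)
    ultimately show ?thesis by simp
  qed
  show ?thesis unfolding ground_state_def using sup nz eig low by blast
qed


theorem mainTheorem1:
  fixes d L :: nat and es :: "(nat list \<times> nat list) list"
  assumes "d \<ge> 1" and "L \<ge> 2" and "gate_order L d es"
  shows "whip L d es (- (pi / (2 * real d))) = superpos (ket all0) (ket (all1 L d))
       \<and> whip L d es (pi / (2 * real d)) = superpos (ket (stag L d)) (ket (stag_bar L d))
       \<and> ground_state L d (-1) (whip L d es (- (pi / (2 * real d))))
           (- (real d * (real L - 1) * real L ^ (d - 1)))
       \<and> ground_state L d 1 (whip L d es (pi / (2 * real d)))
           (- (real d * (real L - 1) * real L ^ (d - 1)))"
proof -
  have L: "L \<ge> 1" using assms(2) by simp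
  have dpos: "real d > 0" using assms(1) by simp
  have so: "site L d (orig d)" using orig_site[OF L] .
  have s0: "sum_list (orig d) = 0" by (simp add: orig_def sum_list_replicate)
  have go: "gate_order L d es" using assms(3) .
  have hd1: "real d * (- (pi / (2 * real d))) / 2 = - pi / 4" using dpos by (simp add: field_simps)
  have W1: "whip L d es (- (pi / (2 * real d))) = (\<lambda>\<sigma>. if config L d \<sigma> \<and> (\<forall>x. site L d x \<longrightarrow> x \<noteq> orig d \<longrightarrow> \<sigma> x = \<sigma> (orig d))
            then complex_of_real (1 / sqrt 2) else 0)"
    using whip_final[where g="\<lambda>x b. b" and sg="\<lambda>x b. if b then -1 else 1"
       and \<theta>="- (pi / (2 * real d))", OF go L] hd1 by simp
  have ne1: "all0 \<noteq> all1 L d"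
  proof
    assume "all0 = all1 L d" then have "all0 (orig d) = all1 L d (orig d)" by simp
    then show False using so by (simp add: all0_def all1_def)
  qed
  have G1: "whip L d es (- (pi / (2 * real d))) = superpos (ket all0) (ket (all1 L d))"
    unfolding W1 superpos_val[OF ne1] using ghz_char[OF L] by presburger
  have hd2: "real d * (pi / (2 * real d)) / 2 = pi / 4" using dpos by (simp add: field_simps)
  have HS2: "(if (b \<noteq> odd (sum_list u)) then -1 else 1) = (if (b \<noteq> odd (sum_list v)) then 1 else (-1::real))"
    if "(u, v) \<in> edges L d" for u v b
    using edge_props(4)[OF that] by auto
  have W2: "whip L d es (pi / (2 * real d)) = (\<lambda>\<sigma>. if config L d \<sigma> \<and> (\<forall>x. site L d x \<longrightarrow> x \<noteq> orig d \<longrightarrow> \<sigma> x = (\<sigma> (orig d) \<noteq> odd (sum_list x)))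
            then complex_of_real (1 / sqrt 2) else 0)"
    using whip_final[where g="\<lambda>x b. b \<noteq> odd (sum_list x)" and sg="\<lambda>x b. if (b \<noteq> odd (sum_list x)) then 1 else -1"
        and \<theta>="pi / (2 * real d)", OF go L _ HS2] hd2 s0 by simp
  have ne2: "stag L d \<noteq> stag_bar L d"
  proof
    assume "stag L d = stag_bar L d" then have "stag L d (orig d) = stag_bar L d (orig d)" by simp
    then show False using so s0 by (simp add: stag_def stag_bar_def)
  qed
  have G2: "whip L d es (pi / (2 * real d)) = superpos (ket (stag L d)) (ket (stag_bar L d))"
    unfolding W2 superpos_val[OF ne2] using stag_char[OF L] by presburger
  have En: "- real (card (edges L d)) = - (real d * (real L - 1) * real L ^ (d - 1))"
    using card_edges[OF L] L by (simp add: of_nat_diff)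
  have c0: "config L d all0" by (simp add: config_def all0_def)
  have c1: "config L d (all1 L d)" by (simp add: config_def all1_def)
  have cs: "config L d (stag L d)" by (simp add: config_def stag_def)
  have cb: "config L d (stag_bar L d)" by (simp add: config_def stag_bar_def)
  have GS1: "ground_state L d (-1) (superpos (ket all0) (ket (all1 L d))) (- real (card (edges L d)))"
    using edge_props(1,2) by (intro ground[OF ne1 c0 c1]) (auto simp: zr_def all0_def all1_def)
  have GS2: "ground_state L d 1 (superpos (ket (stag L d)) (ket (stag_bar L d))) (- real (card (edges L d)))"
  proof (intro ground[OF ne2 cs cb])
    fix u v assume uv: "(u, v) \<in> edges L d"
    have "sum_list v = Suc (sum_list u)" "site L d u" "site L d v" using edge_props[OF uv] by auto
    then show "1 * zr (stag L d u) * zr (stag L d v) = -1" "1 * zr (stag_bar L d u) * zr (stag_bar L d v) = -1"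
      by (auto simp: zr_def stag_def stag_bar_def odd_Suc0[symmetric])
  qed simp
  show ?thesis using G1 G2 GS1 GS2 En by simp
qed

end
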